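(* For every integer $g\ge 0$ let ${\bf D}_g(z)=\sum_{n\ge 0}{\bf d}_g(n)z^n$ be the generating function of $g$-structures and ${\bf D}^*_g(z)=\sum_{n\ge 1}{\bf d}^*_g(n)z^n$ the generating function of irreducible $g$-structures, where $n$ counts vertices. Then $$ {\bf D}^*_0(z) = 1-\frac{1}{{\bf D}_0(z)}, $$ and for every $g\ge 1$ $$ {\bf D}^*_g(z) = -\frac{({\bf D}^*_0(z)-1){\bf D}_g(z)+\sum_{g_1=1}^{g-1}{\bf D}^*_{g_1}(z){\bf D}_{g-g_1}(z)}{{\bf D}_0(z)}. $$
   Context: A diagram over $[n]=\{1,\dots,n\}$ ($n\ge 0$) consists of the vertices $1,\dots,n$ placed in order on a horizontal line (the backbone) together with a set of arcs $(i,j)$, $1\le i<j\le n$, drawn in the upper half-plane, such that each vertex lies in at most one arc. The genus of a diagram is defined as follows. Let $k$ be the number of arcs and list the $2k$ arc endpoints in increasing order as $1,\dots,2k$. Let $\sigma$ be the fixed-point-free involution pairing the two endpoints of each arc, let $\gamma=(1\,2\,\cdots\,2k)$ be the cyclic shift, and let $r$ be the number of cycles of $\gamma\circ\sigma$. The genus $g$ is given by $2-2g=1-k+r$ (the diagram with no arcs has genus $0$). A $g$-structure is a diagram of genus $g$ having no arc of the form $(i,i+1)$. A diagram over $[n]$ with $n\ge1$ is irreducible if there is no $k$ with $1\le k<n$ such that no arc $(i,j)$ satisfies $i\le k<j$, i.e. it cannot be split into two by cutting the backbone without cutting an arc. ${\bf d}_g(n)$ is the number of $g$-structures over $[n]$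 (so ${\bf d}_0(0)=1$ for the empty structure) and ${\bf d}^*_g(n)$ is the number of irreducible $g$-structures over $[n]$, $n\ge 1$. All generating functions are formal power series. *)

theory Defs
  imports Complex_Main "HOL-Computational_Algebra.Formal_Power_Series"
begin

definition diagram :: "nat \<Rightarrow> (nat \<times> nat) set \<Rightarrow> bool" where
  "diagram n A \<longleftrightarrow>
     A \<subseteq> {(i,j). 1 \<le> i \<and> i < j \<and> j \<le> n} \<and>
     (\<forall>a\<in>A. \<forall>b\<in>A. a \<noteq> b \<longrightarrow> {fst a, snd a} \<inter> {fst b, snd b} = {})"

definition endpoints :: "(nat \<times> nat) set \<Rightarrow> nat set" where
  "endpoints A = fst ` A \<union> snd ` A"

definition partner :: "(nat \<times> nat) set \<Rightarrow> nat \<Rightarrow> nat" where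
  "partner A x = (THE y. (x, y) \<in> A \<or> (y, x) \<in> A)"

text \<open>The cyclic shift gamma on the endpoints, taken in increasing order
  (the endpoints are not relabelled to 1..2k; the shift sends each endpoint to the
  next larger endpoint and the largest one to the smallest).\<close>
definition next_endpoint :: "(nat \<times> nat) set \<Rightarrow> nat \<Rightarrow> nat" where
  "next_endpoint A x =
     (if \<exists>y\<in>endpoints A. x < y then Min {y \<in> endpoints A. x < y} else Min (endpoints A))"

definition num_cycles :: "(nat \<Rightarrow> nat) \<Rightarrow> nat set \<Rightarrow> nat" where
  "num_cycles f V = card ((\<lambda>x. {(f ^^ m) x | m. True}) ` V)"

definition boundary_components :: "(nat \<times> nat) set \<Rightarrow> nat" where
  "boundary_components A = num_cycles (next_endpoint A \<circ> partner A) (endpoints A)"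

definition has_genus :: "(nat \<times> nat) set \<Rightarrow> nat \<Rightarrow> bool" where
  "has_genus A g \<longleftrightarrow>
     (if A = {} then g = 0
      else 2 - 2 * int g = 1 - int (card A) + int (boundary_components A))"

definition g_structure :: "nat \<Rightarrow> nat \<Rightarrow> (nat \<times> nat) set \<Rightarrow> bool" where
  "g_structure g n A \<longleftrightarrow> diagram n A \<and> has_genus A g \<and> (\<forall>i. (i, i + 1) \<notin> A)"

definition irreducible_diagram :: "nat \<Rightarrow> (nat \<times> nat) set \<Rightarrow> bool" where
  "irreducible_diagram n A \<longleftrightarrow>
     n \<ge> 1 \<and> \<not> (\<exists>k. 1 \<le> k \<and> k < n \<and> (\<forall>(i, j)\<in>A. \<not> (i \<le> k \<and> k < j)))"

definition d :: "nat \<Rightarrow> nat \<Rightarrow> nat" where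
  "d g n = card {A. g_structure g n A}"

definition dstar :: "nat \<Rightarrow> nat \<Rightarrow> nat" where
  "dstar g n = card {A. g_structure g n A \<and> irreducible_diagram n A}"

definition D :: "nat \<Rightarrow> real fps" where
  "D g = Abs_fps (\<lambda>n. of_nat (d g n))"

text \<open>dstar g 0 = 0 automatically, since irreducibility requires n >= 1.\<close>
definition Dstar :: "nat \<Rightarrow> real fps" where
  "Dstar g = Abs_fps (\<lambda>n. of_nat (dstar g n))"

end

theory Submission
  imports Defs "HOL-Combinatorics.Orbits" "HOL-Combinatorics.Transposition"
begin

definition orb :: "('a \<Rightarrow> 'a) \<Rightarrow> 'a \<Rightarrow> 'a set" where
  "orb f x = {(f ^^ m) x | m. True}"

lemma num_cycles_orb: "num_cycles f V = card (orb f ` V)"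
  unfolding num_cycles_def orb_def by simp

lemma orb_perm: "permutation f \<Longrightarrow> orb f x = orbit f x"
  by (simp add: orb_def orbit_altdef_permutation)

lemma self_in_orb[simp]: "x \<in> orb f x"
  unfolding orb_def by (auto intro: exI[of _ 0])

lemma funpow_in_orb[simp]: "(f ^^ m) x \<in> orb f x"
  unfolding orb_def by auto

lemma orb_closed: "y \<in> orb f x \<Longrightarrow> f y \<in> orb f x"
proof -
  assume "y \<in> orb f x"
  then obtain m where "y = (f ^^ m) x" unfolding orb_def by auto
  then have "f y = (f ^^ Suc m) x" by simp
  then show ?thesis unfolding orb_def by blast
qed

lemma orb_min:
  assumes "b \<in> S" "\<And>x. x \<in> S \<Longrightarrow> f x \<in> S" shows "orb f b \<subseteq> S"
proof
  fix y assume "y \<in> orb f b"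
  then obtain m where "y = (f ^^ m) b" unfolding orb_def by auto
  moreover have "(f ^^ m) b \<in> S" by (induction m) (use assms in auto)
  ultimately show "y \<in> S" by simp
qed

lemma orb_eq: "permutation f \<Longrightarrow> y \<in> orb f x \<Longrightarrow> orb f y = orb f x"
  by (simp add: orb_perm) (meson orbit_swap orbit_trans permutation_self_in_orbit subsetI subset_antisym)

lemma orb_sym: "permutation f \<Longrightarrow> y \<in> orb f x \<Longrightarrow> x \<in> orb f y"
  using orb_eq by (metis self_in_orb)

lemma orb_bounded: "(f ^^ n) s = s \<Longrightarrow> 0 < n \<Longrightarrow> orb f s = {(f ^^ m) s| m. m < n}"
  unfolding orb_def by (auto simp: funpow_mod_eq intro: exI[where x="m mod n" for m])

lemma key_path:
  fixes \<pi> :: "'a \<Rightarrow> 'a"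
  assumes perm: "permutation \<pi>" and ab: "a \<noteq> b"
  defines "\<pi>' \<equiv> \<pi> \<circ> Transposition.transpose a b"
  shows "b \<in> orb \<pi>' a \<longleftrightarrow> a \<notin> orb \<pi> b"
proof -
  obtain p where p: "p > 0" "(\<pi> ^^ p) b = b" using permutation_self[OF perm] by blast
  define m0 where "m0 = (LEAST n. 0 < n \<and> (\<pi> ^^ n) b \<in> {a,b})"
  have ex: "0 < p \<and> (\<pi> ^^ p) b \<in> {a,b}" using p by auto
  have m0: "0 < m0" "(\<pi> ^^ m0) b \<in> {a,b}"
    using LeastI[of "\<lambda>n. 0 < n \<and> (\<pi> ^^ n) b \<in> {a,b}", OF ex] unfolding m0_def by auto
  have lt: "(\<pi> ^^ m) b \<notin> {a,b}" if "0 < m" "m < m0" for m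
    using not_less_Least[of m "\<lambda>n. 0 < n \<and> (\<pi> ^^ n) b \<in> {a,b}"] that unfolding m0_def by auto
  have path: "(\<pi>' ^^ m) a = (\<pi> ^^ m) b" if "1 \<le> m" "m \<le> m0" for m
    using that
  proof (induction m)
    case 0 then show ?case by simp
  next
    case (Suc m)
    show ?case
    proof (cases "m = 0")
      case True then show ?thesis by (simp add: \<pi>'_def)
    next
      case False
      then have h1: "(\<pi>' ^^ m) a = (\<pi> ^^ m) b" using Suc by auto
      have h2: "(\<pi> ^^ m) b \<notin> {a,b}" using lt[of m] False Suc by auto
      note h = h1 h2
      have "(\<pi>' ^^ Suc m) a = \<pi>' ((\<pi>' ^^ m) a)" by simp
      also have "\<dots> = \<pi>' ((\<pi> ^^ m) b)" using h by simp
      also have "\<dots> = \<pi> ((\<pi> ^^ m) b)" using h by (simp add: \<pi>'_def)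
      finally show ?thesis by simp
    qed
  qed
  have pm0: "(\<pi>' ^^ m0) a = (\<pi> ^^ m0) b" using path[of m0] m0 by auto
  show ?thesis
  proof (cases "(\<pi> ^^ m0) b = b")
    case True
    have "orb \<pi> b = {(\<pi> ^^ m) b| m. m < m0}" using orb_bounded[OF True m0(1)] .
    moreover have "a \<noteq> (\<pi> ^^ m) b" if "m < m0" for m
      using lt[of m] that ab by (cases "m = 0") auto
    ultimately have "a \<notin> orb \<pi> b" by auto
    moreover have "b \<in> orb \<pi>' a" using funpow_in_orb[of m0 \<pi>' a] unfolding pm0 True .
    ultimately show ?thesis by simp
  next
    case False
    then have hit: "(\<pi> ^^ m0) b = a" using m0 by auto
    have i1: "a \<in> orb \<pi> b" using funpow_in_orb[of m0 \<pi> b] unfolding hit .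
    have r: "(\<pi>' ^^ m0) a = a" using pm0 hit by simp
    have i2: "orb \<pi>' a = {(\<pi>' ^^ m) a| m. m < m0}" by (rule orb_bounded[OF r m0(1)])
    have i3: "b \<noteq> (\<pi>' ^^ m) a" if "m < m0" for m
    proof (cases "m = 0")
      case True then show ?thesis using ab by simp
    next
      case False then show ?thesis using path[of m] lt[of m] that by auto
    qed
    have "b \<notin> orb \<pi>' a" unfolding i2 using i3 by blast
    with i1 show ?thesis by blast
  qed
qed

lemma perm_orb_sub: "\<pi> permutes V \<Longrightarrow> x \<in> V \<Longrightarrow> orb \<pi> x \<subseteq> V"
  by (rule orb_min) (auto simp: permutes_in_image)

lemma avoid_orb:
  assumes "\<forall>m. (f ^^ m) y \<notin> {a,b}"
  shows "orb (f \<circ> Transposition.transpose a b) y = orb f y"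
proof -
  have "((f \<circ> Transposition.transpose a b) ^^ m) y = (f ^^ m) y" for m
  proof (induction m)
    case (Suc m)
    have "(f ^^ m) y \<notin> {a,b}" using assms by blast
    then show ?case using Suc by simp
  qed simp
  then show ?thesis unfolding orb_def by simp
qed

lemma transp_in: "a \<in> S \<Longrightarrow> b \<in> S \<Longrightarrow> x \<in> S \<Longrightarrow> Transposition.transpose a b x \<in> S"
  by (simp add: transpose_def)

lemma orb_closed2: "y \<in> orb f a \<union> orb f b \<Longrightarrow> f y \<in> orb f a \<union> orb f b"
  using orb_closed by (metis Un_iff)

lemma nc_perm_transp:
  assumes perm: "\<pi> permutes V" and fin: "finite V" and V: "a \<in> V" "b \<in> V" and ab: "a \<noteq> b"
  defines "\<pi>' \<equiv> \<pi> \<circ> Transposition.transpose a b"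
  shows "(a \<in> orb \<pi> b \<longrightarrow> card (orb \<pi>' ` V) = card (orb \<pi> ` V) + 1) \<and>
         (a \<notin> orb \<pi> b \<longrightarrow> card (orb \<pi>' ` V) + 1 = card (orb \<pi> ` V))"
proof -
  have p: "permutation \<pi>" using permutes_imp_permutation[OF fin perm] .
  have perm': "\<pi>' permutes V" unfolding \<pi>'_def by (intro permutes_compose permutes_swap_id perm V)
  have p': "permutation \<pi>'" using permutes_imp_permutation[OF fin perm'] .
  have key: "b \<in> orb \<pi>' a \<longleftrightarrow> a \<notin> orb \<pi> b" unfolding \<pi>'_def by (rule key_path[OF p ab])
  have key2: "a \<in> orb \<pi>' b \<longleftrightarrow> b \<notin> orb \<pi> a"
  proof -
    have "\<pi>' = \<pi> \<circ> Transposition.transpose b a" unfolding \<pi>'_def by (simp add: transpose_commute)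
    then show ?thesis using key_path[OF p ab[symmetric]] by simp
  qed
  have tr: "\<pi> x = \<pi>' (Transposition.transpose a b x)" for x unfolding \<pi>'_def by simp
  define W where "W = {cc. cc \<in> orb \<pi> ` V \<and> a \<notin> cc \<and> b \<notin> cc}"
  have finW: "finite W" unfolding W_def using fin by simp
  have avoid: "orb \<pi>' y = orb \<pi> y" if "a \<notin> orb \<pi> y" "b \<notin> orb \<pi> y" for y
    unfolding \<pi>'_def
  proof (rule avoid_orb)
    show "\<forall>m. (\<pi> ^^ m) y \<notin> {a, b}" using that funpow_in_orb[of _ \<pi> y] by blast
  qed
  have O1: "orb \<pi> ` V = W \<union> {orb \<pi> a, orb \<pi> b}"
  proof -
    have "orb \<pi> y \<in> W \<union> {orb \<pi> a, orb \<pi> b}" if "y \<in> V" for y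
    proof (cases "a \<in> orb \<pi> y")
      case True then show ?thesis using orb_eq[OF p True] by simp
    next
      case F1: False show ?thesis
      proof (cases "b \<in> orb \<pi> y")
        case True then show ?thesis using orb_eq[OF p True] by simp
      next
        case False then show ?thesis using F1 that unfolding W_def by auto
      qed
    qed
    then show ?thesis unfolding W_def using V by auto
  qed
  have sameO: "orb \<pi>' y \<in> {orb \<pi>' a, orb \<pi>' b}" if "y \<in> orb \<pi>' a \<union> orb \<pi>' b" for y
    using that orb_eq[OF p'] by blast
  have O2: "orb \<pi>' ` V = W \<union> {orb \<pi>' a, orb \<pi>' b}"
    if U: "orb \<pi> a \<union> orb \<pi> b \<subseteq> orb \<pi>' a \<union> orb \<pi>' b"
  proof -
    have "orb \<pi>' y \<in> W \<union> {orb \<pi>' a, orb \<pi>' b}" if "y \<in> V" for y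
    proof (cases "a \<notin> orb \<pi> y \<and> b \<notin> orb \<pi> y")
      case True then show ?thesis using avoid[of y] that unfolding W_def by auto
    next
      case False
      then have "y \<in> orb \<pi> a \<union> orb \<pi> b" using orb_sym[OF p] by blast
      then show ?thesis using sameO U by blast
    qed
    moreover have "cc \<in> orb \<pi>' ` V" if "cc \<in> W" for cc
    proof -
      obtain y where y: "y \<in> V" "cc = orb \<pi> y" "a \<notin> orb \<pi> y" "b \<notin> orb \<pi> y"
        using \<open>cc \<in> W\<close> unfolding W_def by auto
      then show ?thesis using avoid[of y] by auto
    qed
    ultimately show ?thesis using V by auto
  qed
  have notW: "cc \<notin> W" if "a \<in> cc \<or> b \<in> cc" for cc using that unfolding W_def by auto
  show ?thesis
  proof (intro conjI impI)
    assume s: "a \<in> orb \<pi> b"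
    have eqab: "orb \<pi> a = orb \<pi> b" using orb_eq[OF p s] .
    have nb: "b \<notin> orb \<pi>' a" using key s by simp
    have "orb \<pi>' a \<union> orb \<pi>' b \<supseteq> orb \<pi> b"
    proof (rule orb_min)
      show "b \<in> orb \<pi>' a \<union> orb \<pi>' b" by simp
      fix x assume x: "x \<in> orb \<pi>' a \<union> orb \<pi>' b"
      have "Transposition.transpose a b x \<in> orb \<pi>' a \<union> orb \<pi>' b"
        by (rule transp_in[OF _ _ x]) simp_all
      then have "\<pi>' (Transposition.transpose a b x) \<in> orb \<pi>' a \<union> orb \<pi>' b" by (rule orb_closed2)
      then show "\<pi> x \<in> orb \<pi>' a \<union> orb \<pi>' b" by (simp only: tr)
    qed
    then have U: "orb \<pi> a \<union> orb \<pi> b \<subseteq> orb \<pi>' a \<union> orb \<pi>' b" using eqab by simp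
    have ne: "orb \<pi>' a \<noteq> orb \<pi>' b" using nb self_in_orb[of b \<pi>'] by metis
    have "card (orb \<pi>' ` V) = card W + 2"
      unfolding O2[OF U] using finW ne notW[of "orb \<pi>' a"] notW[of "orb \<pi>' b"] by simp
    moreover have "card (orb \<pi> ` V) = card W + 1"
      unfolding O1 eqab using finW notW[of "orb \<pi> b"] by simp
    ultimately show "card (orb \<pi>' ` V) = card (orb \<pi> ` V) + 1" by simp
  next
    assume s: "a \<notin> orb \<pi> b"
    have bo: "b \<in> orb \<pi>' a" using key s by simp
    have s2: "b \<notin> orb \<pi> a" using s orb_sym[OF p] by blast
    have ao: "a \<in> orb \<pi>' b" using key2 s2 by simp
    have eq': "orb \<pi>' b = orb \<pi>' a" using orb_eq[OF p' bo] .
    have "orb \<pi>' a \<supseteq> orb \<pi> b"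
    proof (rule orb_min)
      show "b \<in> orb \<pi>' a" by (rule bo)
      fix x assume x: "x \<in> orb \<pi>' a"
      have "Transposition.transpose a b x \<in> orb \<pi>' a"
        by (rule transp_in[OF _ bo x]) simp
      then have "\<pi>' (Transposition.transpose a b x) \<in> orb \<pi>' a" by (rule orb_closed)
      then show "\<pi> x \<in> orb \<pi>' a" by (simp only: tr)
    qed
    moreover have "orb \<pi>' a \<supseteq> orb \<pi> a"
    proof (rule orb_min)
      show "a \<in> orb \<pi>' a" by simp
      fix x assume x: "x \<in> orb \<pi>' a"
      have "Transposition.transpose a b x \<in> orb \<pi>' a"
        by (rule transp_in[OF _ bo x]) simp
      then have "\<pi>' (Transposition.transpose a b x) \<in> orb \<pi>' a" by (rule orb_closed)
      then show "\<pi> x \<in> orb \<pi>' a" by (simp only: tr)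
    qed
    ultimately have U: "orb \<pi> a \<union> orb \<pi> b \<subseteq> orb \<pi>' a \<union> orb \<pi>' b" by blast
    have ne: "orb \<pi> a \<noteq> orb \<pi> b" using s2 self_in_orb[of b \<pi>] by metis
    have "card (orb \<pi>' ` V) = card W + 1"
      unfolding O2[OF U] eq' using finW notW[of "orb \<pi>' a"] by simp
    moreover have "card (orb \<pi> ` V) = card W + 2"
      unfolding O1 using finW ne notW[of "orb \<pi> a"] notW[of "orb \<pi> b"] by simp
    ultimately show "card (orb \<pi>' ` V) + 1 = card (orb \<pi> ` V)" by simp
  qed
qed

definition restr :: "('a \<Rightarrow> 'a) \<Rightarrow> 'a set \<Rightarrow> 'a \<Rightarrow> 'a" where
  "restr f V x = (if x \<in> V then f x else x)"

lemma funpow_in: "f ` V \<subseteq> V \<Longrightarrow> x \<in> V \<Longrightarrow> (f ^^ m) x \<in> V"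
  by (induction m) auto

lemma funpow_cong_on:
  assumes "\<forall>x\<in>V. f x = g x" "f ` V \<subseteq> V" "x \<in> V"
  shows "(f ^^ m) x = (g ^^ m) x"
proof (induction m)
  case (Suc m)
  have "(f ^^ m) x \<in> V" using funpow_in assms by metis
  then show ?case using Suc assms by simp
qed simp

lemma orb_cong_on:
  "\<forall>x\<in>V. f x = g x \<Longrightarrow> f ` V \<subseteq> V \<Longrightarrow> x \<in> V \<Longrightarrow> orb f x = orb g x"
  unfolding orb_def using funpow_cong_on by metis

lemma nc_cong_on:
  assumes "\<forall>x\<in>V. f x = g x" "f ` V \<subseteq> V"
  shows "num_cycles f V = num_cycles g V"
proof -
  have "orb f ` V = orb g ` V" using orb_cong_on[OF assms] by auto
  then show ?thesis by (simp add: num_cycles_orb)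
qed

lemma orb_sub: "f ` V \<subseteq> V \<Longrightarrow> x \<in> V \<Longrightarrow> orb f x \<subseteq> V"
  by (rule orb_min) auto

lemma restr_permutes: "bij_betw f V V \<Longrightarrow> restr f V permutes V"
  by (rule bij_imp_permutes) (auto simp: restr_def bij_betw_def inj_on_def)

lemma restr_agree: "\<forall>x\<in>V. restr f V x = f x"
  by (simp add: restr_def)

lemma nc_transp:
  assumes bij: "bij_betw f V V" and fin: "finite V" and V: "a \<in> V" "b \<in> V" and ab: "a \<noteq> b"
    and h: "\<forall>x\<in>V. h x = f (Transposition.transpose a b x)"
  shows "(a \<in> orb f b \<longrightarrow> num_cycles h V = num_cycles f V + 1) \<and>
         (a \<notin> orb f b \<longrightarrow> num_cycles h V + 1 = num_cycles f V)"
proof -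
  define \<pi> where "\<pi> = restr f V"
  have perm: "\<pi> permutes V" unfolding \<pi>_def by (rule restr_permutes[OF bij])
  have fV: "f ` V \<subseteq> V" using bij by (simp add: bij_betw_def)
  have a1: "\<forall>x\<in>V. \<pi> x = f x" unfolding \<pi>_def by (simp add: restr_def)
  have "\<forall>x\<in>V. h x = (\<pi> \<circ> Transposition.transpose a b) x"
    using h a1 transp_in[OF V] by simp
  moreover have "h ` V \<subseteq> V" using h fV transp_in[OF V] by auto
  ultimately have n1: "num_cycles h V = card (orb (\<pi> \<circ> Transposition.transpose a b) ` V)"
    using nc_cong_on num_cycles_orb by metis
  have "num_cycles f V = num_cycles \<pi> V" by (rule nc_cong_on) (use a1 fV in auto)
  then have n2: "num_cycles f V = card (orb \<pi> ` V)" by (simp add: num_cycles_orb)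
  have o: "orb f b = orb \<pi> b" using orb_cong_on[of V f \<pi>] a1 fV V by auto
  show ?thesis using nc_perm_transp[OF perm fin V ab] unfolding n1 n2 o by blast
qed

lemma orb_eq_on:
  assumes "bij_betw f V V" "x \<in> V" "y \<in> orb f x" "finite V"
  shows "orb f y = orb f x"
proof -
  define \<pi> where "\<pi> = restr f V"
  have perm: "permutation \<pi>" unfolding \<pi>_def
    using restr_permutes[OF assms(1)] permutes_imp_permutation assms(4) by blast
  have fV: "f ` V \<subseteq> V" using assms(1) by (simp add: bij_betw_def)
  have a1: "\<forall>x\<in>V. f x = \<pi> x" unfolding \<pi>_def by (simp add: restr_def)
  have yV: "y \<in> V" using orb_sub[OF fV assms(2)] assms(3) by blast
  show ?thesis using orb_cong_on[OF a1 fV assms(2)] orb_cong_on[OF a1 fV yV] orb_eq[OF perm] assms(3)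
    by simp
qed

lemma nc_union:
  assumes "V1 \<inter> V2 = {}" "f ` V1 \<subseteq> V1" "f ` V2 \<subseteq> V2" "finite V1" "finite V2"
  shows "num_cycles f (V1 \<union> V2) = num_cycles f V1 + num_cycles f V2"
proof -
  have d: "orb f ` V1 \<inter> orb f ` V2 = {}"
  proof (rule ccontr)
    assume "orb f ` V1 \<inter> orb f ` V2 \<noteq> {}"
    then obtain x y where xy: "x \<in> V1" "y \<in> V2" "orb f x = orb f y" by auto
    then have "y \<in> V1" using orb_sub[OF assms(2) xy(1)] self_in_orb[of y f] by auto
    then show False using xy assms(1) by auto
  qed
  show ?thesis unfolding num_cycles_orb image_Un
    by (rule card_Un_disjoint) (use assms d in auto)
qed

lemma nc_conj:
  assumes inj: "inj_on \<phi> V" and fV: "f ` V \<subseteq> V" and c: "\<forall>x\<in>V. f' (\<phi> x) = \<phi> (f x)"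
  shows "num_cycles f' (\<phi> ` V) = num_cycles f V"
proof -
  have it: "(f' ^^ m) (\<phi> x) = \<phi> ((f ^^ m) x)" if "x \<in> V" for x m
  proof (induction m)
    case (Suc m)
    have "(f ^^ m) x \<in> V" using funpow_in[OF fV that] .
    then show ?case using Suc c by simp
  qed simp
  have o: "orb f' (\<phi> x) = \<phi> ` orb f x" if "x \<in> V" for x
    unfolding orb_def using it[OF that] by auto
  have "orb f' ` (\<phi> ` V) = (\<lambda>S. \<phi> ` S) ` (orb f ` V)"
    using o by (auto simp: image_image)
  moreover have "inj_on (\<lambda>S. \<phi> ` S) (orb f ` V)"
    by (rule inj_onI) (use orb_sub[OF fV] inj_on_image_eq_iff[OF inj] in auto)
  ultimately show ?thesis unfolding num_cycles_orb by (simp add: card_image)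
qed


definition nx :: "nat set \<Rightarrow> nat \<Rightarrow> nat" where
  "nx E x = (if \<exists>y\<in>E. x < y then Min {y \<in> E. x < y} else Min E)"

lemma next_endpoint_nx: "next_endpoint A = nx (endpoints A)"
  by (rule ext) (simp add: next_endpoint_def nx_def)

lemma nx_succ:
  assumes "finite E" "y \<in> E" "x < y" shows "x < nx E x \<and> nx E x \<le> y \<and> nx E x \<in> E"
proof -
  have S: "finite {y \<in> E. x < y}" "{y \<in> E. x < y} \<noteq> {}" using assms by auto
  have "nx E x = Min {y \<in> E. x < y}" unfolding nx_def using assms by auto
  moreover have "Min {y \<in> E. x < y} \<in> {y \<in> E. x < y}" by (rule Min_in[OF S])
  moreover have "Min {y \<in> E. x < y} \<le> y" using S assms by (intro Min_le) auto
  ultimately show ?thesis by auto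
qed

lemma nx_max: "finite E \<Longrightarrow> \<forall>y\<in>E. y \<le> x \<Longrightarrow> nx E x = Min E"
proof -
  assume "\<forall>y\<in>E. y \<le> x"
  then have "\<not> (\<exists>y\<in>E. x < y)" by (meson leD)
  then show ?thesis by (simp add: nx_def)
qed

lemma nx_in: assumes "finite E" "E \<noteq> {}" shows "nx E x \<in> E"
proof (cases "\<exists>y\<in>E. x < y")
  case True then obtain y where "y \<in> E" "x < y" by blast
  then show ?thesis using nx_succ[OF assms(1)] by blast
next
  case False then have "nx E x = Min E" unfolding nx_def by (rule if_not_P)
  then show ?thesis using Min_in[OF assms] by simp
qed

lemma nx_eq: "finite E \<Longrightarrow> y \<in> E \<Longrightarrow> x < y \<Longrightarrow> (\<forall>w\<in>E. x < w \<longrightarrow> y \<le> w) \<Longrightarrow> nx E x = y"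
  using nx_succ[of E y x] by (meson le_antisym)

lemma nx_inj: assumes "finite E" shows "inj_on (nx E) E"
proof -
  have *: "nx E x \<noteq> nx E y" if "x \<in> E" "y \<in> E" "x < y" for x y
  proof (cases "\<exists>z\<in>E. y < z")
    case True
    then obtain z where "z \<in> E" "y < z" by blast
    then have "y < nx E y" using nx_succ assms by blast
    moreover have "nx E x \<le> y" using nx_succ[OF assms that(2,3)] by simp
    ultimately show ?thesis by simp
  next
    case False
    then have "nx E y = Min E" using nx_max assms by (meson not_le)
    moreover have "Min E \<le> x" using assms that by simp
    moreover have "x < nx E x" using nx_succ[OF assms that(2,3)] by simp
    ultimately show ?thesis by simp
  qed
  show ?thesis by (rule inj_onI) (metis * linorder_neqE_nat)
qed

lemma nx_bij: "finite E \<Longrightarrow> E \<noteq> {} \<Longrightarrow> bij_betw (nx E) E E"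
  unfolding bij_betw_def using nx_inj nx_in endo_inj_surj[of E "nx E"] by blast

lemma nx_cyclic:
  assumes fin: "finite E" and ne: "E \<noteq> {}"
  shows "num_cycles (nx E) E = 1"
proof -
  have all: "y \<in> orb (nx E) (Min E)" if "y \<in> E" for y
    using that
  proof (induction y rule: less_induct)
    case (less y)
    show ?case
    proof (cases "y = Min E")
      case True then show ?thesis by simp
    next
      case False
      then have my: "Min E < y" using less.prems fin by (simp add: order_le_neq_trans)
      define z where "z = Max {w \<in> E. w < y}"
      have S: "finite {w \<in> E. w < y}" "{w \<in> E. w < y} \<noteq> {}" using fin my Min_in[OF fin ne] by auto
      have z: "z \<in> E" "z < y" using Max_in[OF S] unfolding z_def by auto
      have "nx E z = y"
      proof (rule nx_eq[OF fin less.prems z(2)])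
        show "\<forall>w\<in>E. z < w \<longrightarrow> y \<le> w"
        proof (intro ballI impI)
          fix w assume "w \<in> E" "z < w"
          show "y \<le> w"
          proof (rule ccontr)
            assume "\<not> y \<le> w"
            then have "w \<le> z" using \<open>w \<in> E\<close> S unfolding z_def by (intro Max_ge) auto
            then show False using \<open>z < w\<close> by simp
          qed
        qed
      qed
      moreover have "z \<in> orb (nx E) (Min E)" using less.IH z by blast
      ultimately show ?thesis using orb_closed by metis
    qed
  qed
  have e: "orb (nx E) y = orb (nx E) (Min E)" if "y \<in> E" for y
    using orb_eq_on[OF nx_bij[OF fin ne] Min_in[OF fin ne] all[OF that] fin] .
  have "orb (nx E) ` E = {orb (nx E) (Min E)}"
    using e ne by auto
  then show ?thesis by (simp add: num_cycles_orb)
qed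


lemma diagram_arc: "diagram n A \<Longrightarrow> (i,j) \<in> A \<Longrightarrow> 1 \<le> i \<and> i < j \<and> j \<le> n"
  unfolding diagram_def by auto

lemma diagram_disj: "diagram n A \<Longrightarrow> a \<in> A \<Longrightarrow> b \<in> A \<Longrightarrow> a \<noteq> b \<Longrightarrow> {fst a, snd a} \<inter> {fst b, snd b} = {}"
  unfolding diagram_def by blast

lemma diagram_finite: "diagram n A \<Longrightarrow> finite A"
proof -
  assume "diagram n A"
  then have "A \<subseteq> {1..n} \<times> {1..n}" unfolding diagram_def by auto
  then show ?thesis by (rule finite_subset) simp
qed

lemma diagram_same:
  assumes "diagram n A" "a \<in> A" "b \<in> A" "x \<in> {fst a, snd a}" "x \<in> {fst b, snd b}"
  shows "a = b"
  using diagram_disj[OF assms(1-3)] assms(4,5) by blast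

lemma partner_arc:
  assumes d: "diagram n A" and a: "(x,y) \<in> A"
  shows "partner A x = y \<and> partner A y = x"
proof -
  have "partner A x = y" unfolding partner_def
  proof (rule the_equality)
    show "(x, y) \<in> A \<or> (y, x) \<in> A" using a by simp
    fix z assume "(x, z) \<in> A \<or> (z, x) \<in> A"
    then show "z = y"
    proof
      assume z: "(x,z) \<in> A" then show ?thesis using diagram_same[OF d z a, of x] by simp
    next
      assume z: "(z,x) \<in> A"
      then have "(z,x) = (x,y)" using diagram_same[OF d z a, of x] by simp
      then show ?thesis using diagram_arc[OF d z] by simp
    qed
  qed
  moreover have "partner A y = x" unfolding partner_def
  proof (rule the_equality)
    show "(y, x) \<in> A \<or> (x, y) \<in> A" using a by simp
    fix z assume "(y, z) \<in> A \<or> (z, y) \<in> A"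
    then show "z = x"
    proof
      assume z: "(y,z) \<in> A"
      then have "(y,z) = (x,y)" using diagram_same[OF d z a, of y] by simp
      then show ?thesis using diagram_arc[OF d a] by simp
    next
      assume z: "(z,y) \<in> A" then show ?thesis using diagram_same[OF d z a, of y] by simp
    qed
  qed
  ultimately show ?thesis ..
qed

lemma endpoints_iff: "x \<in> endpoints A \<longleftrightarrow> (\<exists>y. (x,y) \<in> A \<or> (y,x) \<in> A)"
  unfolding endpoints_def by force

lemma endpoints_finite: "finite A \<Longrightarrow> finite (endpoints A)"
  unfolding endpoints_def by simp

lemma endpoints_empty: "endpoints A = {} \<longleftrightarrow> A = {}"
  unfolding endpoints_def by auto

lemma endpoints_insert: "endpoints (insert (i,j) S) = {i,j} \<union> endpoints S"
  unfolding endpoints_def by auto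

lemma endpoints_mono: "S \<subseteq> A \<Longrightarrow> endpoints S \<subseteq> endpoints A"
  unfolding endpoints_def by auto

lemma partner_end:
  assumes d: "diagram n A" and S: "S \<subseteq> A" and x: "x \<in> endpoints S"
  shows "partner A x \<in> endpoints S \<and> partner A (partner A x) = x \<and> partner A x \<noteq> x"
proof -
  obtain y where "(x,y) \<in> S \<or> (y,x) \<in> S" using x endpoints_iff by metis
  then show ?thesis
  proof
    assume a: "(x,y) \<in> S"
    then have "partner A x = y" "partner A y = x" using partner_arc[OF d] S by auto
    moreover have "x < y" using diagram_arc[OF d] a S by blast
    ultimately show ?thesis using a endpoints_iff by auto
  next
    assume a: "(y,x) \<in> S"
    then have "partner A x = y" "partner A y = x" using partner_arc[OF d] S by auto
    moreover have "y < x" using diagram_arc[OF d] a S by blast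
    ultimately show ?thesis using a endpoints_iff by auto
  qed
qed

definition sg :: "(nat \<times> nat) set \<Rightarrow> (nat \<times> nat) set \<Rightarrow> nat \<Rightarrow> nat" where
  "sg A S x = (if x \<in> endpoints S then partner A x else x)"

lemma sg_bij:
  assumes d: "diagram n A" and S: "S \<subseteq> A"
  shows "bij_betw (sg A S) (endpoints A) (endpoints A)"
proof -
  let ?E = "endpoints A"
  have fin: "finite ?E" using endpoints_finite diagram_finite d by blast
  have into: "sg A S ` ?E \<subseteq> ?E"
    using partner_end[OF d S] endpoints_mono[OF S] unfolding sg_def by auto
  have inv: "sg A S (sg A S x) = x" for x
    using partner_end[OF d S] unfolding sg_def by auto
  have inj: "inj_on (sg A S) ?E" by (metis inj_onI inv)
  show ?thesis unfolding bij_betw_def using endo_inj_surj[OF fin into inj] inj by simp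
qed

lemma genus_count:
  assumes d: "diagram n A" and ne: "A \<noteq> {}" and S: "S \<subseteq> A"
  shows "num_cycles (nx (endpoints A) \<circ> sg A S) (endpoints A) \<le> card S + 1 \<and>
         even (num_cycles (nx (endpoints A) \<circ> sg A S) (endpoints A) + card S + 1)"
proof -
  let ?E = "endpoints A"
  have finA: "finite A" using diagram_finite[OF d] .
  have fin: "finite ?E" using endpoints_finite finA by blast
  have neE: "?E \<noteq> {}" using ne endpoints_empty by blast
  have finS: "finite S" using finA S finite_subset by blast
  show ?thesis using finS S
  proof (induction S rule: finite_subset_induct')
    case empty
    have "sg A {} = id" by (rule ext) (simp add: sg_def endpoints_def)
    then show ?case using nx_cyclic[OF fin neE] by simp
  next
    case (insert a F)
    obtain i j where a: "a = (i,j)" by (cases a)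
    have F: "F \<subseteq> A" using insert by simp
    have ij: "i < j" using diagram_arc[OF d] insert a by blast
    have iE: "i \<in> ?E" "j \<in> ?E" using insert a endpoints_iff by auto
    have nF: "i \<notin> endpoints F" "j \<notin> endpoints F"
    proof -
      have "x \<notin> endpoints F" if "x \<in> {i,j}" for x
      proof
        assume "x \<in> endpoints F"
        then obtain y where "(x,y) \<in> F \<or> (y,x) \<in> F" using endpoints_iff by metis
        then obtain b where b: "b \<in> F" "x \<in> {fst b, snd b}" by force
        then have "b = (i,j)" using diagram_same[OF d, of b "(i,j)" x] F insert a that by auto
        then show False using b insert a by simp
      qed
      then show "i \<notin> endpoints F" "j \<notin> endpoints F" by auto
    qed
    have pij: "partner A i = j" "partner A j = i" using partner_arc[OF d] insert a by auto
    let ?f = "nx ?E \<circ> sg A F"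
    have bij: "bij_betw ?f ?E ?E"
      using bij_betw_trans[OF sg_bij[OF d F] nx_bij[OF fin neE]] by simp
    have h: "\<forall>x\<in>?E. (nx ?E \<circ> sg A (insert a F)) x = ?f (Transposition.transpose i j x)"
    proof
      fix x assume "x \<in> ?E"
      show "(nx ?E \<circ> sg A (insert a F)) x = ?f (Transposition.transpose i j x)"
        using nF pij ij unfolding a sg_def endpoints_insert
        by (cases "x = i"; cases "x = j") auto
    qed
    have c: "card (insert a F) = card F + 1" using insert finite_subset[OF F finA] by simp
    define N where "N = num_cycles (nx ?E \<circ> sg A (insert a F)) ?E"
    define Ol where "Ol = num_cycles ?f ?E"
    have t: "(i \<in> orb ?f j \<longrightarrow> N = Ol + 1) \<and> (i \<notin> orb ?f j \<longrightarrow> N + 1 = Ol)"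
      using nc_transp[OF bij fin iE(1) iE(2) _ h] ij unfolding N_def Ol_def by (simp add: comp_def)
    have ih: "Ol \<le> card F + 1 \<and> even (Ol + card F + 1)" using insert.IH unfolding Ol_def .
    have "N \<le> card F + 1 + 1 \<and> even (N + (card F + 1) + 1)"
      using t ih by (cases "i \<in> orb ?f j") (simp_all, presburger+)
    then show ?case unfolding N_def c .
  qed
qed

definition gen :: "(nat \<times> nat) set \<Rightarrow> nat" where
  "gen A = (if A = {} then 0 else (card A + 1 - boundary_components A) div 2)"

lemma bc_eq: "diagram n A \<Longrightarrow> boundary_components A = num_cycles (nx (endpoints A) \<circ> sg A A) (endpoints A)"
proof -
  assume d: "diagram n A"
  let ?E = "endpoints A"
  have fin: "finite ?E" using endpoints_finite diagram_finite d by blast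
  show ?thesis unfolding boundary_components_def next_endpoint_nx
  proof (rule nc_cong_on)
    show "\<forall>x\<in>?E. (nx ?E \<circ> partner A) x = (nx ?E \<circ> sg A A) x" by (simp add: sg_def)
    show "(nx ?E \<circ> partner A) ` ?E \<subseteq> ?E"
      using nx_in[OF fin] by auto
  qed
qed

lemma bc_bounds:
  assumes "diagram n A" "A \<noteq> {}"
  shows "boundary_components A \<le> card A + 1 \<and> even (boundary_components A + card A + 1)"
  using genus_count[OF assms, of A] bc_eq[OF assms(1)] by simp

lemma has_genus_iff:
  assumes d: "diagram n A"
  shows "has_genus A g \<longleftrightarrow> g = gen A"
proof (cases "A = {}")
  case True then show ?thesis by (simp add: has_genus_def gen_def)
next
  case False
  obtain r k where rk: "r = boundary_components A" "k = card A" by blast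
  have b: "r \<le> k + 1" "even (r + k + 1)" using bc_bounds[OF d False] rk by auto
  then obtain q where q: "k + 1 - r = 2 * q" by (metis dvd_def even_add even_diff_nat)
  have "has_genus A g \<longleftrightarrow> 2 - 2 * int g = 1 - int k + int r"
    using False rk by (simp add: has_genus_def)
  also have "\<dots> \<longleftrightarrow> g = q" using b q by linarith
  also have "\<dots> \<longleftrightarrow> g = gen A" using False rk q by (simp add: gen_def)
  finally show ?thesis .
qed


definition sh :: "nat \<Rightarrow> (nat \<times> nat) set \<Rightarrow> (nat \<times> nat) set" where
  "sh k B = (\<lambda>(i,j). (i + k, j + k)) ` B"

lemma sh_mem: "(x,y) \<in> sh k B \<longleftrightarrow> k \<le> x \<and> k \<le> y \<and> (x - k, y - k) \<in> B"
  unfolding sh_def by force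

lemma sh_mem2: "(x + k, y + k) \<in> sh k B \<longleftrightarrow> (x, y) \<in> B"
  unfolding sh_def by force

lemma endpoints_sh: "endpoints (sh k B) = (\<lambda>x. x + k) ` endpoints B"
  unfolding endpoints_def sh_def by force

lemma card_sh: "card (sh k B) = card B"
  unfolding sh_def by (rule card_image) (auto simp: inj_on_def)

lemma sh_empty: "sh k B = {} \<longleftrightarrow> B = {}"
  unfolding sh_def by auto

lemma endpoints_Un: "endpoints (A \<union> B) = endpoints A \<union> endpoints B"
  unfolding endpoints_def by auto

lemma endpoints_bound: "diagram n A \<Longrightarrow> x \<in> endpoints A \<Longrightarrow> 1 \<le> x \<and> x \<le> n"
  unfolding endpoints_iff using diagram_arc by fastforce

lemma concat_diagram:
  assumes dA: "diagram k A" and dB: "diagram m B"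
  shows "diagram (k + m) (A \<union> sh k B)"
  unfolding diagram_def
proof (intro conjI ballI impI)
  show "A \<union> sh k B \<subseteq> {(i, j). 1 \<le> i \<and> i < j \<and> j \<le> k + m}"
  proof
    fix p assume "p \<in> A \<union> sh k B"
    then show "p \<in> {(i, j). 1 \<le> i \<and> i < j \<and> j \<le> k + m}"
    proof
      assume pA: "p \<in> A"
      obtain x y where "p = (x,y)" by (cases p)
      then show ?thesis using diagram_arc[OF dA, of x y] pA by auto
    next
      assume "p \<in> sh k B"
      then obtain i j where "p = (i + k, j + k)" "(i,j) \<in> B" unfolding sh_def by auto
      then show ?thesis using diagram_arc[OF dB, of i j] by auto
    qed
  qed
  fix a b assume a: "a \<in> A \<union> sh k B" and b: "b \<in> A \<union> sh k B" and ab: "a \<noteq> b"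
  show "{fst a, snd a} \<inter> {fst b, snd b} = {}"
  proof (cases "a \<in> A")
    case aA: True show ?thesis
    proof (cases "b \<in> A")
      case True then show ?thesis using diagram_disj[OF dA aA True ab] by simp
    next
      case False
      then have "b \<in> sh k B" using b by simp
      then obtain i j where "b = (i + k, j + k)" "(i,j) \<in> B" unfolding sh_def by auto
      moreover obtain x y where "a = (x,y)" by (cases a)
      ultimately show ?thesis using diagram_arc[OF dA, of x y] diagram_arc[OF dB, of i j] aA by auto
    qed
  next
    case aA: False
    then obtain i j where aij: "a = (i + k, j + k)" "(i,j) \<in> B" using a unfolding sh_def by auto
    show ?thesis
    proof (cases "b \<in> A")
      case True
      obtain x y where "b = (x,y)" by (cases b)
      then show ?thesis using diagram_arc[OF dA, of x y] diagram_arc[OF dB, of i j] aij True by auto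
    next
      case False
      then obtain i' j' where bij: "b = (i' + k, j' + k)" "(i',j') \<in> B" using b unfolding sh_def by auto
      then have "(i,j) \<noteq> (i',j')" using ab aij by auto
      then have "{i, j} \<inter> {i', j'} = {}" using diagram_disj[OF dB aij(2) bij(2)] by simp
      then show ?thesis using aij bij by auto
    qed
  qed
qed

lemma sh_diagram: "diagram m B \<Longrightarrow> diagram (k + m) (sh k B)"
  using concat_diagram[of k "{}" m B] by (simp add: diagram_def)

lemma partner_sub:
  assumes "diagram n C" "diagram n' S" "S \<subseteq> C" "x \<in> endpoints S"
  shows "partner C x = partner S x"
proof -
  obtain y where "(x,y) \<in> S \<or> (y,x) \<in> S" using assms(4) endpoints_iff by metis
  then show ?thesis
  proof
    assume a: "(x,y) \<in> S"
    then have "(x,y) \<in> C" using assms(3) by blast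
    then show ?thesis using partner_arc[OF assms(1)] partner_arc[OF assms(2) a] by simp
  next
    assume a: "(y,x) \<in> S"
    then have "(y,x) \<in> C" using assms(3) by blast
    then show ?thesis using partner_arc[OF assms(1)] partner_arc[OF assms(2) a] by simp
  qed
qed

lemma fbij:
  assumes d: "diagram n A" and ne: "A \<noteq> {}"
  shows "bij_betw (nx (endpoints A) \<circ> partner A) (endpoints A) (endpoints A)"
proof -
  let ?E = "endpoints A"
  have fin: "finite ?E" using endpoints_finite diagram_finite d by blast
  have neE: "?E \<noteq> {}" using ne endpoints_empty by blast
  have "bij_betw (partner A) ?E ?E"
    using sg_bij[OF d order_refl] by (rule bij_betw_cong[THEN iffD1, rotated]) (simp add: sg_def)
  then show ?thesis using bij_betw_trans nx_bij[OF fin neE] by blast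
qed

lemma nx_shift:
  assumes fin: "finite E" and x: "x \<in> E"
  shows "nx ((\<lambda>y. y + k) ` E) (x + k) = nx E x + k"
proof -
  have ne: "E \<noteq> {}" using x by auto
  show ?thesis
  proof (cases "\<exists>y\<in>E. x < y")
    case True
    have S: "finite {y \<in> E. x < y}" "{y \<in> E. x < y} \<noteq> {}" using fin True by auto
    have eq: "{y \<in> (\<lambda>y. y + k) ` E. x + k < y} = (\<lambda>y. y + k) ` {y \<in> E. x < y}" by auto
    have "nx ((\<lambda>y. y + k) ` E) (x + k) = Min ((\<lambda>y. y + k) ` {y \<in> E. x < y})"
      unfolding nx_def eq using True by auto
    also have "\<dots> = Min {y \<in> E. x < y} + k"
      using mono_Min_commute[of "\<lambda>y. y + k", OF _ S] by (simp add: mono_def)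
    also have "\<dots> = nx E x + k" unfolding nx_def using True by simp
    finally show ?thesis .
  next
    case False
    then have "\<not> (\<exists>y\<in>(\<lambda>y. y + k) ` E. x + k < y)" by auto
    then have "nx ((\<lambda>y. y + k) ` E) (x + k) = Min ((\<lambda>y. y + k) ` E)" unfolding nx_def by (rule if_not_P)
    also have "\<dots> = Min E + k"
      using mono_Min_commute[of "\<lambda>y. y + k", OF _ fin ne] by (simp add: mono_def)
    also have "\<dots> = nx E x + k" unfolding nx_def using False by simp
    finally show ?thesis .
  qed
qed

lemma bc_sh:
  assumes dB: "diagram m B"
  shows "boundary_components (sh k B) = boundary_components B"
proof -
  let ?E = "endpoints B"
  have fin: "finite ?E" using endpoints_finite diagram_finite dB by blast
  have dB': "diagram (k + m) (sh k B)" using sh_diagram[OF dB] .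
  have p: "partner (sh k B) (x + k) = partner B x + k" if xE: "x \<in> ?E" for x
  proof -
    obtain y where "(x,y) \<in> B \<or> (y,x) \<in> B" using xE endpoints_iff by metis
    then show ?thesis
    proof
      assume a: "(x,y) \<in> B"
      then have "(x + k, y + k) \<in> sh k B" using sh_mem2 by blast
      then show ?thesis using partner_arc[OF dB a] partner_arc[OF dB'] by simp
    next
      assume a: "(y,x) \<in> B"
      then have "(y + k, x + k) \<in> sh k B" using sh_mem2 by blast
      then show ?thesis using partner_arc[OF dB a] partner_arc[OF dB'] by simp
    qed
  qed
  have pin: "partner B x \<in> ?E" if "x \<in> ?E" for x using partner_end[OF dB order_refl that] by simp
  show ?thesis
    unfolding boundary_components_def next_endpoint_nx endpoints_sh
  proof (rule nc_conj)
    show "inj_on (\<lambda>x. x + k) ?E" by (simp add: inj_on_def)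
    show "(nx ?E \<circ> partner B) ` ?E \<subseteq> ?E"
      using nx_in[OF fin] by auto
    show "\<forall>x\<in>?E. (nx ((\<lambda>x. x + k) ` ?E) \<circ> partner (sh k B)) (x + k) = (nx ?E \<circ> partner B) x + k"
      using p pin nx_shift[OF fin] by simp
  qed
qed

lemma gen_sh: "diagram m B \<Longrightarrow> gen (sh k B) = gen B"
  unfolding gen_def using bc_sh card_sh sh_empty by metis


lemma nx_below: "finite E \<Longrightarrow> w \<in> E \<Longrightarrow> x < w \<Longrightarrow> nx E x \<le> w"
  using nx_succ by blast

lemma nx_union:
  assumes f1: "finite E1" and f2: "finite E2" and n1: "E1 \<noteq> {}" and n2: "E2 \<noteq> {}"
    and lt: "\<forall>x\<in>E1. \<forall>y\<in>E2. x < y"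
  shows "\<And>x. x \<in> E1 \<Longrightarrow> x \<noteq> Max E1 \<Longrightarrow> nx (E1 \<union> E2) x = nx E1 x"
    and "nx (E1 \<union> E2) (Max E1) = Min E2"
    and "\<And>x. x \<in> E2 \<Longrightarrow> x \<noteq> Max E2 \<Longrightarrow> nx (E1 \<union> E2) x = nx E2 x"
    and "nx (E1 \<union> E2) (Max E2) = Min E1"
    and "nx E1 (Max E1) = Min E1"
    and "nx E2 (Max E2) = Min E2"
proof -
  have fU: "finite (E1 \<union> E2)" using f1 f2 by simp
  have M1: "Max E1 \<in> E1" using Max_in[OF f1 n1] .
  have M2: "Max E2 \<in> E2" using Max_in[OF f2 n2] .
  have m1: "Min E1 \<in> E1" using Min_in[OF f1 n1] .
  have m2: "Min E2 \<in> E2" using Min_in[OF f2 n2] .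
  {
    fix x assume x: "x \<in> E1" "x \<noteq> Max E1"
    then have xl: "x < Max E1" using f1 by (simp add: order_neq_le_trans)
    have s: "x < nx E1 x" "nx E1 x \<in> E1" using nx_succ[OF f1 M1 xl] by auto
    show "nx (E1 \<union> E2) x = nx E1 x"
    proof (rule nx_eq[OF fU])
      show "nx E1 x \<in> E1 \<union> E2" using s by simp
      show "x < nx E1 x" using s by simp
      show "\<forall>w\<in>E1 \<union> E2. x < w \<longrightarrow> nx E1 x \<le> w"
        using nx_below[OF f1] lt s(2) by (meson Un_iff less_imp_le)
    qed
  }
  show "nx (E1 \<union> E2) (Max E1) = Min E2"
  proof (rule nx_eq[OF fU])
    show "Min E2 \<in> E1 \<union> E2" using m2 by simp
    show "Max E1 < Min E2" using lt M1 m2 by blast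
    show "\<forall>w\<in>E1 \<union> E2. Max E1 < w \<longrightarrow> Min E2 \<le> w"
      using f1 f2 by (auto dest: Max_ge[OF f1])
  qed
  {
    fix x assume x: "x \<in> E2" "x \<noteq> Max E2"
    then have xl: "x < Max E2" using f2 by (simp add: order_neq_le_trans)
    have s: "x < nx E2 x" "nx E2 x \<in> E2" using nx_succ[OF f2 M2 xl] by auto
    show "nx (E1 \<union> E2) x = nx E2 x"
    proof (rule nx_eq[OF fU])
      show "nx E2 x \<in> E1 \<union> E2" using s by simp
      show "x < nx E2 x" using s by simp
      show "\<forall>w\<in>E1 \<union> E2. x < w \<longrightarrow> nx E2 x \<le> w"
        using nx_below[OF f2] lt x(1) by (meson Un_iff less_asym)
    qed
  }
  have allle: "\<forall>y\<in>E1 \<union> E2. y \<le> Max E2"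
    using lt M2 f2 by (auto intro: less_imp_le)
  have "nx (E1 \<union> E2) (Max E2) = Min (E1 \<union> E2)" using nx_max[OF fU allle] .
  also have "\<dots> = Min E1"
  proof (rule Min_eqI)
    show "finite (E1 \<union> E2)" using fU .
    show "Min E1 \<in> E1 \<union> E2" using m1 by simp
    fix y assume "y \<in> E1 \<union> E2"
    then show "Min E1 \<le> y"
    proof
      assume "y \<in> E1" then show ?thesis using f1 by simp
    next
      assume "y \<in> E2" then show ?thesis using lt m1 by (meson less_imp_le)
    qed
  qed
  finally show "nx (E1 \<union> E2) (Max E2) = Min E1" .
  show "nx E1 (Max E1) = Min E1" using nx_max[OF f1] f1 by simp
  show "nx E2 (Max E2) = Min E2" using nx_max[OF f2] f2 by simp
qed

lemma diagram_mono: "diagram n A \<Longrightarrow> n \<le> n' \<Longrightarrow> diagram n' A"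
  unfolding diagram_def by fastforce

lemma concat_bc:
  assumes dA: "diagram k A" and dB: "diagram m B" and neA: "A \<noteq> {}" and neB: "B \<noteq> {}"
  shows "boundary_components (A \<union> sh k B) + 1 = boundary_components A + boundary_components (sh k B)"
proof -
  let ?B = "sh k B"
  define C where "C = A \<union> ?B"
  have dB': "diagram (k + m) ?B" using sh_diagram[OF dB] .
  have dC: "diagram (k + m) C" unfolding C_def using concat_diagram[OF dA dB] .
  have dA': "diagram (k + m) A" using diagram_mono[OF dA] by simp
  have neB': "?B \<noteq> {}" using neB sh_empty by blast
  define E1 where "E1 = endpoints A"
  define E2 where "E2 = endpoints ?B"
  have f1: "finite E1" unfolding E1_def using endpoints_finite diagram_finite dA by blast
  have f2: "finite E2" unfolding E2_def using endpoints_finite diagram_finite dB' by blast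
  have n1: "E1 \<noteq> {}" unfolding E1_def using neA endpoints_empty by blast
  have n2: "E2 \<noteq> {}" unfolding E2_def using neB' endpoints_empty by blast
  have lt: "\<forall>x\<in>E1. \<forall>y\<in>E2. x < y"
  proof (intro ballI)
    fix x y assume x: "x \<in> E1" and y: "y \<in> E2"
    have "x \<le> k" using endpoints_bound[OF dA] x unfolding E1_def by blast
    moreover obtain z where "z \<in> endpoints B" "y = z + k" using y unfolding E2_def endpoints_sh by auto
    moreover have "1 \<le> z" using endpoints_bound[OF dB] calculation(2) by blast
    ultimately show "x < y" by simp
  qed
  have disj: "E1 \<inter> E2 = {}" using lt by auto
  have EC: "endpoints C = E1 \<union> E2" unfolding C_def E1_def E2_def endpoints_Un ..
  note nu = nx_union[OF f1 f2 n1 n2 lt]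
  define MA where "MA = Max E1"
  define MB where "MB = Max E2"
  have MA: "MA \<in> E1" unfolding MA_def using Max_in[OF f1 n1] .
  have MB: "MB \<in> E2" unfolding MB_def using Max_in[OF f2 n2] .
  define xA where "xA = partner A MA"
  define xB where "xB = partner ?B MB"
  have xA: "xA \<in> E1" "partner A xA = MA"
    using partner_end[OF dA order_refl, of MA] MA unfolding xA_def E1_def by auto
  have xB: "xB \<in> E2" "partner ?B xB = MB"
    using partner_end[OF dB' order_refl, of MB] MB unfolding xB_def E2_def by auto
  have pC1: "partner C x = partner A x" if "x \<in> E1" for x
    using partner_sub[OF dC dA' _ that[unfolded E1_def]] unfolding C_def by blast
  have pC2: "partner C x = partner ?B x" if "x \<in> E2" for x
    using partner_sub[OF dC dB' _ that[unfolded E2_def]] unfolding C_def by blast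
  have pin1: "partner A x \<in> E1 \<and> partner A (partner A x) = x" if "x \<in> E1" for x
    using partner_end[OF dA order_refl] that unfolding E1_def by blast
  have pin2: "partner ?B x \<in> E2 \<and> partner ?B (partner ?B x) = x" if "x \<in> E2" for x
    using partner_end[OF dB' order_refl] that unfolding E2_def by blast
  define fA where "fA = nx E1 \<circ> partner A"
  define fB where "fB = nx E2 \<circ> partner ?B"
  define fC where "fC = nx (E1 \<union> E2) \<circ> partner C"
  define g where "g x = (if x \<in> E1 then fA x else fB x)" for x
  have bA: "bij_betw fA E1 E1" unfolding fA_def E1_def using fbij[OF dA neA] .
  have bB: "bij_betw fB E2 E2" unfolding fB_def E2_def using fbij[OF dB' neB'] .
  have bA': "bij_betw g E1 E1" using bA by (rule bij_betw_cong[THEN iffD1, rotated]) (simp add: g_def)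
  have bB': "bij_betw g E2 E2" using bB
    by (rule bij_betw_cong[THEN iffD1, rotated]) (use disj in \<open>auto simp: g_def\<close>)
  have bg: "bij_betw g (E1 \<union> E2) (E1 \<union> E2)" using bij_betw_combine[OF bA' bB' disj] .
  have xAB: "xA \<noteq> xB" using xA xB disj by blast
  have h: "\<forall>x\<in>E1 \<union> E2. fC x = g (Transposition.transpose xA xB x)"
  proof
    fix x assume x: "x \<in> E1 \<union> E2"
    show "fC x = g (Transposition.transpose xA xB x)"
    proof (cases "x = xA")
      case True
      have "g (Transposition.transpose xA xB x) = g xB" using True by simp
      also have "\<dots> = nx E2 MB" using xB disj unfolding g_def fB_def by auto
      also have "\<dots> = Min E2" using nu(6) unfolding MB_def .
      also have "\<dots> = nx (E1 \<union> E2) MA" using nu(2) unfolding MA_def ..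
      also have "\<dots> = fC x" unfolding fC_def using True pC1[OF xA(1)] xA by simp
      finally show ?thesis ..
    next
      case nA: False
      show ?thesis
      proof (cases "x = xB")
        case True
        have "g (Transposition.transpose xA xB x) = g xA" using True by simp
        also have "\<dots> = nx E1 MA" using xA unfolding g_def fA_def by auto
        also have "\<dots> = Min E1" using nu(5) unfolding MA_def .
        also have "\<dots> = nx (E1 \<union> E2) MB" using nu(4) unfolding MB_def ..
        also have "\<dots> = fC x" unfolding fC_def using True pC2[OF xB(1)] xB by simp
        finally show ?thesis ..
      next
        case nB: False
        then have tx: "Transposition.transpose xA xB x = x" using nA by simp
        show ?thesis
        proof (cases "x \<in> E1")
          case True
          have pne: "partner A x \<noteq> MA" using pin1[OF True] nA xA_def by metis
          have "fC x = nx (E1 \<union> E2) (partner A x)" unfolding fC_def using pC1[OF True] by simp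
          also have "\<dots> = nx E1 (partner A x)" using nu(1)[of "partner A x"] pin1[OF True] pne
            unfolding MA_def by blast
          finally show ?thesis unfolding tx g_def fA_def using True by simp
        next
          case False
          then have x2: "x \<in> E2" using x by simp
          have pne: "partner ?B x \<noteq> MB" using pin2[OF x2] nB xB_def by metis
          have "fC x = nx (E1 \<union> E2) (partner ?B x)" unfolding fC_def using pC2[OF x2] by simp
          also have "\<dots> = nx E2 (partner ?B x)" using nu(3)[of "partner ?B x"] pin2[OF x2] pne
            unfolding MB_def by blast
          finally show ?thesis unfolding tx g_def fB_def using False by simp
        qed
      qed
    qed
  qed
  have gE2: "g ` E2 \<subseteq> E2" using bB' by (simp add: bij_betw_def)
  have gE1: "g ` E1 \<subseteq> E1" using bA' by (simp add: bij_betw_def)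
  have "xA \<notin> orb g xB" using orb_sub[OF gE2 xB(1)] xA(1) disj by blast
  then have t: "num_cycles fC (E1 \<union> E2) + 1 = num_cycles g (E1 \<union> E2)"
    using nc_transp[OF bg _ _ _ xAB h] f1 f2 xA(1) xB(1) by blast
  have "num_cycles g (E1 \<union> E2) = num_cycles g E1 + num_cycles g E2"
    using nc_union[OF disj gE1 gE2 f1 f2] .
  also have "num_cycles g E1 = num_cycles fA E1"
    by (rule nc_cong_on) (use gE1 in \<open>auto simp: g_def\<close>)
  also have "num_cycles g E2 = num_cycles fB E2"
    by (rule nc_cong_on) (use gE2 disj in \<open>auto simp: g_def\<close>)
  finally have "num_cycles fC (E1 \<union> E2) + 1 = num_cycles fA E1 + num_cycles fB E2" using t by simp
  then show ?thesis
    unfolding boundary_components_def next_endpoint_nx C_def[symmetric] EC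
    unfolding E1_def[symmetric] E2_def[symmetric] fA_def fB_def fC_def EC .
qed

lemma arith_aux:
  fixes a b c ra rb rc qa qb :: nat
  assumes "c = a + b" "rc + 1 = ra + rb" "ra \<le> a + 1" "rb \<le> b + 1"
    "a + 1 - ra = 2 * qa" "b + 1 - rb = 2 * qb"
  shows "c + 1 - rc = 2 * (qa + qb)"
  using assms by (simp add: distrib_left)

lemma concat_gen:
  assumes dA: "diagram k A" and dB: "diagram m B"
  shows "gen (A \<union> sh k B) = gen A + gen B"
proof (cases "A = {}")
  case True then show ?thesis using gen_sh[OF dB] by (simp add: gen_def)
next
  case neA: False
  show ?thesis
  proof (cases "B = {}")
    case True then show ?thesis by (simp add: sh_def gen_def)
  next
    case neB: False
    have neC: "A \<union> sh k B \<noteq> {}" using neA by simp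
    have disj: "A \<inter> sh k B = {}"
      using diagram_arc[OF dA] diagram_arc[OF dB] by (force simp: sh_def)
    have fA: "finite A" using diagram_finite[OF dA] .
    have fB: "finite (sh k B)" using diagram_finite[OF sh_diagram[OF dB]] .
    have cC: "card (A \<union> sh k B) = card A + card B"
      using card_Un_disjoint[OF fA fB disj] card_sh by simp
    have r: "boundary_components (A \<union> sh k B) + 1 = boundary_components A + boundary_components B"
      using concat_bc[OF dA dB neA neB] bc_sh[OF dB] by simp
    have bA: "boundary_components A \<le> card A + 1 \<and> even (boundary_components A + card A + 1)"
      using bc_bounds[OF dA neA] .
    have bB: "boundary_components B \<le> card B + 1 \<and> even (boundary_components B + card B + 1)"
      using bc_bounds[OF dB neB] .
    obtain qA where qA: "card A + 1 - boundary_components A = 2 * qA"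
      using bA by (metis dvd_def even_add even_diff_nat)
    obtain qB where qB: "card B + 1 - boundary_components B = 2 * qB"
      using bB by (metis dvd_def even_add even_diff_nat)
    have "card (A \<union> sh k B) + 1 - boundary_components (A \<union> sh k B) = 2 * (qA + qB)"
      using cC r bA[THEN conjunct1] bB[THEN conjunct1] qA qB by (rule arith_aux)
    then show ?thesis unfolding gen_def using neA neB neC qA qB by simp
  qed
qed


definition noadj :: "(nat \<times> nat) set \<Rightarrow> bool" where
  "noadj A \<longleftrightarrow> (\<forall>i. (i, i + 1) \<notin> A)"

lemma g_structure_iff: "g_structure g n A \<longleftrightarrow> diagram n A \<and> gen A = g \<and> noadj A"
  unfolding g_structure_def noadj_def using has_genus_iff by metis

definition cutat :: "(nat \<times> nat) set \<Rightarrow> nat \<Rightarrow> bool" where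
  "cutat C k \<longleftrightarrow> (\<forall>(i, j)\<in>C. \<not> (i \<le> k \<and> k < j))"

lemma irred_iff: "irreducible_diagram n A \<longleftrightarrow> 1 \<le> n \<and> (\<forall>k. 1 \<le> k \<and> k < n \<longrightarrow> \<not> cutat A k)"
  unfolding irreducible_diagram_def cutat_def by blast

definition lft :: "(nat \<times> nat) set \<Rightarrow> nat \<Rightarrow> (nat \<times> nat) set" where
  "lft C k = {(i, j) \<in> C. j \<le> k}"

definition rgt :: "(nat \<times> nat) set \<Rightarrow> nat \<Rightarrow> (nat \<times> nat) set" where
  "rgt C k = (\<lambda>(i, j). (i - k, j - k)) ` {(i, j) \<in> C. k < i}"

lemma diagram_subset: "diagram n C \<Longrightarrow> S \<subseteq> C \<Longrightarrow> diagram n S"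
  unfolding diagram_def by blast

lemma cut_split:
  assumes "cutat C k" and d: "diagram n C" shows "C = lft C k \<union> sh k (rgt C k)"
proof
  show "C \<subseteq> lft C k \<union> sh k (rgt C k)"
  proof
    fix p assume p: "p \<in> C"
    obtain i j where ij: "p = (i,j)" by (cases p)
    show "p \<in> lft C k \<union> sh k (rgt C k)"
    proof (cases "j \<le> k")
      case True then show ?thesis using p ij by (simp add: lft_def)
    next
      case False
      then have "k < i" using assms p ij unfolding cutat_def by force
      then have "(i - k, j - k) \<in> rgt C k" using p ij unfolding rgt_def by force
      then have "(i - k + k, j - k + k) \<in> sh k (rgt C k)" using sh_mem2 by blast
      then show ?thesis using \<open>k < i\<close> False ij by simp
    qed
  qed
next
  show "lft C k \<union> sh k (rgt C k) \<subseteq> C"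
  proof
    fix p assume "p \<in> lft C k \<union> sh k (rgt C k)"
    then show "p \<in> C"
    proof
      assume "p \<in> lft C k" then show ?thesis by (auto simp: lft_def)
    next
      assume "p \<in> sh k (rgt C k)"
      then obtain i j where "p = (i - k + k, j - k + k)" "(i, j) \<in> C" "k < i"
        unfolding sh_def rgt_def by auto
      moreover have "i < j" using calculation diagram_arc[OF d] by blast
      ultimately show ?thesis by simp
    qed
  qed
qed

lemma lft_diagram: "diagram n C \<Longrightarrow> diagram k (lft C k)"
  unfolding diagram_def lft_def by fastforce

lemma rgt_diagram:
  assumes d: "diagram n C"
  shows "diagram (n - k) (rgt C k)"
  unfolding diagram_def
proof (intro conjI ballI impI)
  show "rgt C k \<subseteq> {(i, j). 1 \<le> i \<and> i < j \<and> j \<le> n - k}"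
    using diagram_arc[OF d] unfolding rgt_def by fastforce
  fix a b assume a: "a \<in> rgt C k" and b: "b \<in> rgt C k" and ab: "a \<noteq> b"
  obtain i j where aij: "a = (i - k, j - k)" "(i,j) \<in> C" "k < i" using a unfolding rgt_def by auto
  obtain i' j' where bij: "b = (i' - k, j' - k)" "(i',j') \<in> C" "k < i'" using b unfolding rgt_def by auto
  have "i < j" "i' < j'" using diagram_arc[OF d] aij bij by blast+
  then have "(i,j) \<noteq> (i',j')" using ab aij bij by auto
  then have "{i,j} \<inter> {i',j'} = {}" using diagram_disj[OF d aij(2) bij(2)] by simp
  then show "{fst a, snd a} \<inter> {fst b, snd b} = {}" using aij bij \<open>i < j\<close> \<open>i' < j'\<close> by auto
qed

lemma noadj_lft: "noadj C \<Longrightarrow> noadj (lft C k)"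
  unfolding noadj_def lft_def by auto

lemma noadj_rgt: "noadj C \<Longrightarrow> noadj (rgt C k)"
  unfolding noadj_def
proof (intro allI notI)
  fix x assume na: "\<forall>i. (i, i + 1) \<notin> C" and x: "(x, x + 1) \<in> rgt C k"
  then obtain a b where ab: "(a,b) \<in> C" "k < a" "x = a - k" "x + 1 = b - k" unfolding rgt_def by auto
  then have "b = a + 1" by simp
  then show False using na ab by blast
qed

lemma noadj_concat: "noadj A \<Longrightarrow> noadj B \<Longrightarrow> noadj (A \<union> sh k B)"
  unfolding noadj_def sh_def by auto

lemma cut_full: "diagram n C \<Longrightarrow> cutat C n"
  unfolding cutat_def using diagram_arc by fastforce

lemma concat_parts:
  assumes dA: "diagram k A" and dB: "diagram m B"
  shows "lft (A \<union> sh k B) k = A" "rgt (A \<union> sh k B) k = B" "cutat (A \<union> sh k B) k"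
proof -
  have a1: "j \<le> k" "i < j" "1 \<le> i" if "(i,j) \<in> A" for i j using diagram_arc[OF dA that] by auto
  have b1: "1 \<le> i" "i < j" if "(i,j) \<in> B" for i j using diagram_arc[OF dB that] by auto
  show "lft (A \<union> sh k B) k = A"
    unfolding lft_def sh_def using a1 b1 by fastforce
  have "{(i, j). (i, j) \<in> A \<union> sh k B \<and> k < i} = sh k B"
    unfolding sh_def using a1 b1 by fastforce
  then show "rgt (A \<union> sh k B) k = B"
    unfolding rgt_def sh_def by (force simp: image_image)
  show "cutat (A \<union> sh k B) k"
    unfolding cutat_def sh_def using a1 b1 by fastforce
qed

definition fcut :: "(nat \<times> nat) set \<Rightarrow> nat" where
  "fcut C = (LEAST k. 1 \<le> k \<and> cutat C k)"

lemma fcut_props: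
  assumes d: "diagram n C" and n: "1 \<le> n"
  shows "1 \<le> fcut C" "fcut C \<le> n" "cutat C (fcut C)" "irreducible_diagram (fcut C) (lft C (fcut C))"
proof -
  have ex: "1 \<le> n \<and> cutat C n" using cut_full[OF d] n by simp
  show c1: "1 \<le> fcut C" "cutat C (fcut C)" using LeastI[of "\<lambda>k. 1 \<le> k \<and> cutat C k", OF ex]
    unfolding fcut_def by auto
  show "fcut C \<le> n" using Least_le[of "\<lambda>k. 1 \<le> k \<and> cutat C k", OF ex] unfolding fcut_def .
  have nc: "\<not> cutat C k'" if "1 \<le> k'" "k' < fcut C" for k'
    using not_less_Least[of k' "\<lambda>k. 1 \<le> k \<and> cutat C k"] that unfolding fcut_def by auto
  show "irreducible_diagram (fcut C) (lft C (fcut C))"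
    unfolding irred_iff
  proof (intro conjI allI impI)
    show "1 \<le> fcut C" by (rule c1(1))
    fix k' assume k': "1 \<le> k' \<and> k' < fcut C"
    then obtain i j where ij: "(i,j) \<in> C" "i \<le> k'" "k' < j" using nc[of k'] unfolding cutat_def by auto
    then have "j \<le> fcut C" using c1(2) k' unfolding cutat_def by fastforce
    then have "(i,j) \<in> lft C (fcut C)" using ij by (simp add: lft_def)
    then show "\<not> cutat (lft C (fcut C)) k'" using ij unfolding cutat_def by auto
  qed
qed

lemma fcut_concat:
  assumes dA: "diagram k A" and dB: "diagram m B" and irr: "irreducible_diagram k A"
  shows "fcut (A \<union> sh k B) = k"
  unfolding fcut_def
proof (rule Least_equality)
  show "1 \<le> k \<and> cutat (A \<union> sh k B) k" using concat_parts(3)[OF dA dB] irr irred_iff by blast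
  fix y assume y: "1 \<le> y \<and> cutat (A \<union> sh k B) y"
  show "k \<le> y"
  proof (rule ccontr)
    assume "\<not> k \<le> y"
    then have "\<not> cutat A y" using irr y irred_iff by auto
    then show False using y unfolding cutat_def by auto
  qed
qed


definition TT :: "nat \<Rightarrow> nat \<Rightarrow> (nat \<times> nat \<times> (nat \<times> nat) set \<times> (nat \<times> nat) set) set" where
  "TT g n = (SIGMA k:{1..n}. SIGMA g1:{0..g}.
     {A. g_structure g1 k A \<and> irreducible_diagram k A} \<times> {B. g_structure (g - g1) (n - k) B})"

definition phi :: "nat \<times> nat \<times> (nat \<times> nat) set \<times> (nat \<times> nat) set \<Rightarrow> (nat \<times> nat) set" where
  "phi x = (case x of (k, g1, A, B) \<Rightarrow> A \<union> sh k B)"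

lemma struct_finite: "finite {A. g_structure g n A}"
proof (rule finite_subset)
  show "{A. g_structure g n A} \<subseteq> Pow ({1..n} \<times> {1..n})"
    unfolding g_structure_def diagram_def by auto
qed simp

lemma phi_bij:
  assumes n: "1 \<le> n"
  shows "bij_betw phi (TT g n) {C. g_structure g n C}"
  unfolding bij_betw_def
proof (intro conjI)
  show "inj_on phi (TT g n)"
  proof (rule inj_onI)
    fix x y assume x: "x \<in> TT g n" and y: "y \<in> TT g n" and e: "phi x = phi y"
    obtain k g1 A B where xx: "x = (k, g1, A, B)" by (cases x) auto
    obtain k' g1' A' B' where yy: "y = (k', g1', A', B')" by (cases y) auto
    have h1: "diagram k A" "gen A = g1" "irreducible_diagram k A" "diagram (n - k) B"
      using x unfolding xx TT_def g_structure_iff by auto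
    have h2: "diagram k' A'" "gen A' = g1'" "irreducible_diagram k' A'" "diagram (n - k') B'"
      using y unfolding yy TT_def g_structure_iff by auto
    have C: "A \<union> sh k B = A' \<union> sh k' B'" using e unfolding xx yy phi_def by simp
    have kk: "k = k'" using fcut_concat[OF h1(1,4,3)] fcut_concat[OF h2(1,4,3)] C by simp
    have AA: "A = A'" using concat_parts(1)[OF h1(1,4)] concat_parts(1)[OF h2(1,4)] C kk by metis
    have BB: "B = B'" using concat_parts(2)[OF h1(1,4)] concat_parts(2)[OF h2(1,4)] C kk by metis
    show "x = y" unfolding xx yy using kk AA BB h1(2) h2(2) by simp
  qed
  show "phi ` TT g n = {C. g_structure g n C}"
  proof
    show "phi ` TT g n \<subseteq> {C. g_structure g n C}"
    proof
      fix C assume "C \<in> phi ` TT g n"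
      then obtain k g1 A B where x: "(k, g1, A, B) \<in> TT g n" and C: "C = A \<union> sh k B"
        unfolding phi_def by auto
      have h1: "diagram k A" "gen A = g1" "noadj A" "diagram (n - k) B" "gen B = g - g1" "noadj B"
        "k \<le> n" "g1 \<le> g"
        using x unfolding TT_def g_structure_iff by auto
      have "diagram (k + (n - k)) C" unfolding C by (rule concat_diagram[OF h1(1,4)])
      then have "diagram n C" using h1(7) by simp
      moreover have "gen C = g" unfolding C using concat_gen[OF h1(1,4)] h1 by simp
      moreover have "noadj C" unfolding C using noadj_concat h1 by blast
      ultimately show "C \<in> {C. g_structure g n C}" by (simp add: g_structure_iff)
    qed
  next
    show "{C. g_structure g n C} \<subseteq> phi ` TT g n"
    proof
      fix C assume "C \<in> {C. g_structure g n C}"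
      then have d: "diagram n C" "gen C = g" "noadj C" by (auto simp: g_structure_iff)
      define k where "k = fcut C"
      note fc = fcut_props[OF d(1) n, folded k_def]
      define A where "A = lft C k"
      define B where "B = rgt C k"
      have dA: "diagram k A" unfolding A_def by (rule lft_diagram[OF d(1)])
      have dB: "diagram (n - k) B" unfolding B_def by (rule rgt_diagram[OF d(1)])
      have CC: "C = A \<union> sh k B" unfolding A_def B_def by (rule cut_split[OF fc(3) d(1)])
      have gg: "gen A + gen B = g" using concat_gen[OF dA dB] CC d(2) by simp
      have nA: "noadj A" unfolding A_def by (rule noadj_lft[OF d(3)])
      have nB: "noadj B" unfolding B_def by (rule noadj_rgt[OF d(3)])
      have "(k, gen A, A, B) \<in> TT g n"
        unfolding TT_def g_structure_iff
        using fc dA dB gg nA nB unfolding A_def[symmetric]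
        by auto
      moreover have "phi (k, gen A, A, B) = C" unfolding phi_def CC by simp
      ultimately show "C \<in> phi ` TT g n" by force
    qed
  qed
qed

lemma card_TT: "card (TT g n) = (\<Sum>k=1..n. \<Sum>g1=0..g. dstar g1 k * d (g - g1) (n - k))"
proof -
  have f1: "finite {A. g_structure g1 k A \<and> irreducible_diagram k A}" for g1 k
    using struct_finite by (rule finite_subset[rotated]) auto
  show ?thesis unfolding TT_def
    by (simp add: card_SigmaI f1 struct_finite card_cartesian_product dstar_def d_def)
qed

lemma d_rec: "1 \<le> n \<Longrightarrow> d g n = (\<Sum>k=1..n. \<Sum>g1=0..g. dstar g1 k * d (g - g1) (n - k))"
  using bij_betw_same_card[OF phi_bij] card_TT unfolding d_def by metis

lemma d_zero: "d g 0 = (if g = 0 then 1 else 0)"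
proof -
  have "diagram 0 A \<longleftrightarrow> A = {}" for A unfolding diagram_def by auto
  then have "{A. g_structure g 0 A} = (if g = 0 then {{}} else {})"
    unfolding g_structure_def has_genus_def by auto
  then show ?thesis unfolding d_def by simp
qed

lemma dstar_zero: "dstar g 0 = 0"
  unfolding dstar_def irreducible_diagram_def by simp


lemma D_rec: "D g = (if g = 0 then 1 else 0) + (\<Sum>g1=0..g. Dstar g1 * D (g - g1))"
proof (rule fps_ext)
  fix n
  have s: "fps_nth (\<Sum>g1=0..g. Dstar g1 * D (g - g1)) n =
        (\<Sum>g1=0..g. \<Sum>i=0..n. real (dstar g1 i) * real (d (g - g1) (n - i)))"
    by (simp add: fps_sum_nth fps_mult_nth Dstar_def D_def)
  show "fps_nth (D g) n = fps_nth ((if g = 0 then 1 else 0) + (\<Sum>g1=0..g. Dstar g1 * D (g - g1))) n"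
  proof (cases "n = 0")
    case True
    then show ?thesis unfolding fps_add_nth s by (simp add: dstar_zero d_zero D_def)
  next
    case False
    have "(\<Sum>g1=0..g. \<Sum>i=0..n. real (dstar g1 i) * real (d (g - g1) (n - i))) =
          (\<Sum>i=0..n. \<Sum>g1=0..g. real (dstar g1 i) * real (d (g - g1) (n - i)))"
      by (rule sum.swap)
    also have "\<dots> = (\<Sum>i=1..n. \<Sum>g1=0..g. real (dstar g1 i) * real (d (g - g1) (n - i)))"
      by (simp add: sum.atLeast_Suc_atMost dstar_zero)
    also have "\<dots> = real (d g n)"
      using d_rec[of n g] False by simp
    finally have "fps_nth (\<Sum>g1=0..g. Dstar g1 * D (g - g1)) n = real (d g n)" using s by simp
    then show ?thesis using False by (simp add: D_def)
  qed
qed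

lemma D0_nth0: "fps_nth (D 0) 0 = 1"
  by (simp add: D_def d_zero)

theorem lemma2:
  shows "Dstar 0 = 1 - 1 / D 0 \<and>
    (\<forall>g\<ge>1. Dstar g =
           - (((Dstar 0 - 1) * D g + (\<Sum>g1 = 1..g - 1. Dstar g1 * D (g - g1))) / D 0))"
proof -
  let ?X = "D 0"
  have X0: "fps_nth ?X 0 \<noteq> 0" using D0_nth0 by simp
  have inv: "?X * inverse ?X = 1" using inverse_mult_eq_1'[OF X0] .
  have dv: "\<And>f. f / ?X = f * inverse ?X" using fps_divide_unit[OF X0] by simp
  have r0: "?X = 1 + Dstar 0 * ?X" using D_rec[of 0] by simp
  have part1: "Dstar 0 = 1 - 1 / ?X"
  proof -
    have e: "Dstar 0 * ?X = ?X - 1" using r0 by (metis add_diff_cancel_left')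
    have "Dstar 0 = (Dstar 0 * ?X) * inverse ?X" using inv by (simp add: mult.assoc)
    then have "Dstar 0 = (?X - 1) * inverse ?X" using e by simp
    also have "\<dots> = ?X * inverse ?X - inverse ?X" by (simp add: algebra_simps)
    also have "\<dots> = 1 - 1 / ?X" using inv dv by simp
    finally show ?thesis .
  qed
  have part2: "Dstar g = - (((Dstar 0 - 1) * D g + (\<Sum>g1 = 1..g - 1. Dstar g1 * D (g - g1))) / ?X)"
    if g: "g \<ge> 1" for g
  proof -
    obtain h where h: "g = Suc h" using g by (cases g) auto
    let ?S = "\<Sum>g1 = 1..h. Dstar g1 * D (g - g1)"
    have "(\<Sum>g1=0..g. Dstar g1 * D (g - g1)) = (\<Sum>g1=0..h. Dstar g1 * D (g - g1)) + Dstar g * ?X"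
      unfolding h by simp
    also have "(\<Sum>g1=0..h. Dstar g1 * D (g - g1)) = Dstar 0 * D g + ?S"
      by (simp add: sum.atLeast_Suc_atMost)
    finally have rg: "D g = Dstar 0 * D g + ?S + Dstar g * ?X" using D_rec[of g] g by simp
    have e: "Dstar g * ?X = - ((Dstar 0 - 1) * D g + ?S)" using rg by (simp add: algebra_simps)
    have "Dstar g = (Dstar g * ?X) * inverse ?X" using inv by (simp add: mult.assoc)
    then have "Dstar g = - ((Dstar 0 - 1) * D g + ?S) * inverse ?X" using e by simp
    then show ?thesis using dv h by (simp add: algebra_simps)
  qed
  show ?thesis using part1 part2 by blast
qed


end
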